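(* Let $R$ be a Bézout domain and let $A,B,C\in R^{n\times n}$ satisfy $ABA=ACA$. If $AB$ is Drazin invertible, then there exists $k\in\mathbb{N}$ such that $(AB)^s$ is similar to $(CA)^s$ for every integer $s\geq k$.
   Context: A Bézout domain is an integral domain in which every finitely generated ideal is principal. A matrix $M\in R^{n\times n}$ is Drazin invertible if there exists $X\in R^{n\times n}$ with $MX=XM$, $XMX=X$ and $M^{m+1}X=M^m$ for some nonnegative integer $m$; such $X$ is unique and denoted $M^D$. Two matrices $M,N\in R^{n\times n}$ are similar if $M=S^{-1}NS$ for some invertible $S\in R^{n\times n}$. *)

theory Defs
  imports "Jordan_Normal_Form.Matrix"
begin

definition fg_ideal :: "'a::comm_ring_1 set \<Rightarrow> 'a set" where
  "fg_ideal F = {x. \<exists>c. x = (\<Sum>f\<in>F. c f * f)}"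

class bezout_domain = idom +
  assumes fg_ideal_principal: "finite (F :: 'a set) \<Longrightarrow>
     \<exists>d. {x. \<exists>c. x = (\<Sum>f\<in>F. c f * f)} = {r * d | r. True}"

definition drazin_inverse :: "'a::semiring_1 mat \<Rightarrow> 'a mat \<Rightarrow> bool" where
  "drazin_inverse M X \<longleftrightarrow> X \<in> carrier_mat (dim_row M) (dim_row M) \<and>
     M * X = X * M \<and> X * M * X = X \<and> (\<exists>m. M ^\<^sub>m (m + 1) * X = M ^\<^sub>m m)"

definition drazin_invertible :: "'a::semiring_1 mat \<Rightarrow> bool" where
  "drazin_invertible M \<longleftrightarrow> (\<exists>X. drazin_inverse M X)"

end

theory Submission imports Defs "Jordan_Normal_Form.Determinant" begin

lemma bezout2:
  fixes a b :: "'a::bezout_domain"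
  shows "\<exists>x y p q. x*q - y*p = 1 \<and> p*a + q*b = 0"
proof (cases "a = b")
  case True
  show ?thesis by (rule exI[of _ 1], rule exI[of _ 0], rule exI[of _ "-1"], rule exI[of _ 1]) (simp add: True)
next
  case False
  obtain d where hd: "{x. \<exists>c. x = (\<Sum>f\<in>{a,b}. c f * f)} = {r*d | r. True}"
    using fg_ideal_principal[of "{a,b}"] by auto
  have sab: "\<And>c. (\<Sum>f\<in>{a,b}. c f * f) = c a * a + c b * b" using False by simp
  have "d \<in> {x. \<exists>c. x = (\<Sum>f\<in>{a,b}. c f * f)}" unfolding hd
    by (rule CollectI, rule exI[of _ 1], simp)
  then obtain c where dc: "d = c a * a + c b * b" unfolding sab by auto
  have "a \<in> {x. \<exists>c. x = (\<Sum>f\<in>{a,b}. c f * f)}"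
    by (rule CollectI, rule exI[of _ "\<lambda>f. if f = a then 1 else 0"], use False in simp)
  hence "a \<in> {r*d | r. True}" by (simp only: hd)
  then obtain ra where ra: "a = ra * d" by auto
  have "b \<in> {x. \<exists>c. x = (\<Sum>f\<in>{a,b}. c f * f)}"
    by (rule CollectI, rule exI[of _ "\<lambda>f. if f = b then 1 else 0"], use False in simp)
  hence "b \<in> {r*d | r. True}" by (simp only: hd)
  then obtain rb where rb: "b = rb * d" by auto
  have d0: "d \<noteq> 0" using ra rb False by auto
  have "(c a * ra + c b * rb) * d = c a * (ra * d) + c b * (rb * d)" by (simp add: algebra_simps)
  also have "\<dots> = d" by (simp only: ra[symmetric] rb[symmetric] dc[symmetric])
  finally have "(c a * ra + c b * rb) * d = 1 * d" by simp
  hence one: "c a * ra + c b * rb = 1" using d0 by (metis mult_cancel_right)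
  have e1: "c a * ra - c b * (- rb) = 1" using one by simp
  have e2: "(- rb) * a + ra * b = 0" unfolding ra rb by (simp add: algebra_simps)
  show ?thesis using e1 e2 by blast
qed

definition Dm :: "nat \<Rightarrow> nat \<Rightarrow> 'a::comm_ring_1 mat" where
  "Dm n r = mat n n (\<lambda>(i,j). if i = j \<and> i < r then 1 else 0)"

lemma Dm_carrier[simp]: "Dm n r \<in> carrier_mat n n"
  unfolding Dm_def by simp

lemma mult_entry: "A \<in> carrier_mat n m \<Longrightarrow> B \<in> carrier_mat m p \<Longrightarrow> i < n \<Longrightarrow> j < p \<Longrightarrow>
  (A * B) $$ (i,j) = (\<Sum>k<m. A $$ (i,k) * B $$ (k,j))"
  by (auto simp: scalar_prod_def lessThan_atLeast0 intro!: sum.cong)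

lemma Dm_idem: "Dm n r * Dm n r = Dm n r"
proof (rule eq_matI)
  fix i j assume ij: "i < dim_row (Dm n r)" "j < dim_col (Dm n r)"
  hence i: "i < n" and j: "j < n" by (auto simp: Dm_def)
  have "(Dm n r * Dm n r) $$ (i,j) = (\<Sum>k<n. Dm n r $$ (i,k) * Dm n r $$ (k,j))"
    using i j by (simp add: mult_entry[of _ n n _ n])
  also have "\<dots> = (\<Sum>k<n. (if k = i then Dm n r $$ (i,j) else 0))"
    using i j by (intro sum.cong) (auto simp: Dm_def)
  also have "\<dots> = Dm n r $$ (i,j)" using i by simp
  finally show "(Dm n r * Dm n r) $$ (i,j) = Dm n r $$ (i,j)" .
qed (auto simp: Dm_def)

lemma Dm_Suc: "Dm (Suc n) (Suc r) = four_block_mat (1\<^sub>m 1) (0\<^sub>m 1 n) (0\<^sub>m n 1) (Dm n r)"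
  by (rule eq_matI) (auto simp: Dm_def)

lemma Dm_0: "Dm n 0 = 0\<^sub>m n n"
  by (rule eq_matI) (auto simp: Dm_def)

lemma sum2: "(\<Sum>k<2. f k) = f 0 + f (1::nat)"
  by (simp add: numeral_2_eq_2)

lemma sum2': "(\<Sum>k\<in>{0..<2}. f k) = f 0 + f (1::nat)"
  by (simp add: numeral_2_eq_2)

lemma less2: "(i::nat) < 2 \<longleftrightarrow> i = 0 \<or> i = 1" by auto

lemma inv_cancel: fixes A :: "'a::comm_ring_1 mat" shows "A \<in> carrier_mat n n \<Longrightarrow> B \<in> carrier_mat n n \<Longrightarrow> A * B = 1\<^sub>m n \<Longrightarrow>
  X \<in> carrier_mat n m \<Longrightarrow> A * (B * X) = X"
proof -
  assume A: "A \<in> carrier_mat n n" and B: "B \<in> carrier_mat n n" and AB: "A * B = 1\<^sub>m n"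
    and X: "X \<in> carrier_mat n m"
  have "A * (B * X) = (A * B) * X" using A B X by (simp add: assoc_mult_mat[of _ n n _ n _ m])
  also have "\<dots> = X" unfolding AB by (rule left_mult_one_mat[OF X])
  finally show ?thesis .
qed

lemma col_reduce:
  fixes v :: "'a::bezout_domain mat"
  assumes "v \<in> carrier_mat n 1"
  shows "\<exists>U V. U \<in> carrier_mat n n \<and> V \<in> carrier_mat n n \<and> U * V = 1\<^sub>m n \<and> V * U = 1\<^sub>m n \<and>
    (\<forall>i. 0 < i \<and> i < n \<longrightarrow> (U * v) $$ (i,0) = 0)"
  using assms
proof (induction n arbitrary: v)
  case 0
  show ?case by (rule exI[of _ "1\<^sub>m 0"], rule exI[of _ "1\<^sub>m 0"]) auto
next
  case (Suc n v)
  show ?case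
  proof (cases n)
    case 0
    show ?thesis by (rule exI[of _ "1\<^sub>m (Suc n)"], rule exI[of _ "1\<^sub>m (Suc n)"]) (auto simp: 0)
  next
    case (Suc k)
    note nk = Suc
    define w where "w = mat n 1 (\<lambda>(i,j). v $$ (Suc i, j))"
    have w: "w \<in> carrier_mat n 1" unfolding w_def by simp
    from Suc.IH[OF w] obtain U' V' where U': "U' \<in> carrier_mat n n" and V': "V' \<in> carrier_mat n n"
      and UV': "U' * V' = 1\<^sub>m n" and VU': "V' * U' = 1\<^sub>m n"
      and z': "\<forall>i. 0 < i \<and> i < n \<longrightarrow> (U' * w) $$ (i,0) = 0" by blast
    define a where "a = mat 1 1 (\<lambda>_. v $$ (0,0))"
    have a: "a \<in> carrier_mat 1 1" unfolding a_def by simp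
    have vblk: "v = four_block_mat a (0\<^sub>m 1 0) w (0\<^sub>m n 0)"
      using Suc.prems by (intro eq_matI) (auto simp: a_def w_def)
    define U1 where "U1 = four_block_mat (1\<^sub>m 1) (0\<^sub>m 1 n) (0\<^sub>m n 1) U'"
    define V1 where "V1 = four_block_mat (1\<^sub>m 1) (0\<^sub>m 1 n) (0\<^sub>m n 1) V'"
    have U1: "U1 \<in> carrier_mat (Suc n) (Suc n)" unfolding U1_def using U' by auto
    have V1: "V1 \<in> carrier_mat (Suc n) (Suc n)" unfolding V1_def using V' by auto
    have U1V1: "U1 * V1 = 1\<^sub>m (Suc n)" unfolding U1_def V1_def
      using U' V' by (subst mult_four_block_mat[of _ 1 1 _ n _ n _ _ 1 _ n]) (auto simp: UV')
    have V1U1: "V1 * U1 = 1\<^sub>m (Suc n)" unfolding U1_def V1_def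
      using U' V' by (subst mult_four_block_mat[of _ 1 1 _ n _ n _ _ 1 _ n]) (auto simp: VU')
    define x where "x = U1 * v"
    have xblk: "x = four_block_mat a (0\<^sub>m 1 0) (U' * w) (0\<^sub>m n 0)"
      unfolding x_def U1_def vblk
      using U' w a by (subst mult_four_block_mat[of _ 1 1 _ n _ n _ _ 1 _ 0]) auto
    have x: "x \<in> carrier_mat (Suc n) 1" unfolding xblk using U' w a by auto
    have x0: "x $$ (Suc i, 0) = 0" if "0 < i" "i < n" for i
      using that z' U' w a unfolding xblk by auto
    obtain xx yy p q where b1: "xx*q - yy*p = 1" and b2: "p * x$$(0,0) + q * x$$(1,0) = 0"
      using bezout2 by blast
    define G where "G = mat 2 2 (\<lambda>(i,j). if i = 0 then (if j = 0 then xx else yy) else (if j = 0 then p else q))"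
    define H where "H = mat 2 2 (\<lambda>(i,j). if i = 0 then (if j = 0 then q else -yy) else (if j = 0 then -p else xx))"
    have G: "G \<in> carrier_mat 2 2" and H: "H \<in> carrier_mat 2 2" unfolding G_def H_def by auto
    have GH: "G * H = 1\<^sub>m 2"
      by (rule eq_matI) (insert b1, auto simp: scalar_prod_def sum2' less2 G_def H_def algebra_simps)
    have HG: "H * G = 1\<^sub>m 2"
      by (rule eq_matI) (insert b1, auto simp: scalar_prod_def sum2' less2 G_def H_def algebra_simps)
    define U2 where "U2 = four_block_mat G (0\<^sub>m 2 k) (0\<^sub>m k 2) (1\<^sub>m k)"
    define V2 where "V2 = four_block_mat H (0\<^sub>m 2 k) (0\<^sub>m k 2) (1\<^sub>m k)"
    have U2: "U2 \<in> carrier_mat (Suc n) (Suc n)" unfolding U2_def using G nk by auto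
    have V2: "V2 \<in> carrier_mat (Suc n) (Suc n)" unfolding V2_def using H nk by auto
    have U2V2: "U2 * V2 = 1\<^sub>m (Suc n)" unfolding U2_def V2_def
      using G H nk by (subst mult_four_block_mat[of _ 2 2 _ k _ k _ _ 2 _ k]) (auto simp: GH)
    have V2U2: "V2 * U2 = 1\<^sub>m (Suc n)" unfolding U2_def V2_def
      using G H nk by (subst mult_four_block_mat[of _ 2 2 _ k _ k _ _ 2 _ k]) (auto simp: HG)
    define x1 where "x1 = mat 2 1 (\<lambda>(i,j). x $$ (i,0))"
    have x1: "x1 \<in> carrier_mat 2 1" unfolding x1_def by simp
    have xblk2: "x = four_block_mat x1 (0\<^sub>m 2 0) (0\<^sub>m k 1) (0\<^sub>m k 0)"
    proof (rule eq_matI)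
      fix i j assume "i < dim_row (four_block_mat x1 (0\<^sub>m 2 0) (0\<^sub>m k 1) (0\<^sub>m k 0))"
        "j < dim_col (four_block_mat x1 (0\<^sub>m 2 0) (0\<^sub>m k 1) (0\<^sub>m k 0))"
      hence ij: "i < Suc n" "j = 0" using x1 nk by auto
      show "x $$ (i,j) = four_block_mat x1 (0\<^sub>m 2 0) (0\<^sub>m k 1) (0\<^sub>m k 0) $$ (i,j)"
      proof (cases "i < 2")
        case True thus ?thesis using ij x1 nk by (auto simp: x1_def)
      next
        case False
        then obtain i' where "i = Suc i'" "0 < i'" "i' < n" using ij by (cases i) auto
        thus ?thesis using ij x1 nk x0 by auto
      qed
    qed (insert x x1 nk, auto)
    have U2x: "U2 * x = four_block_mat (G * x1) (0\<^sub>m 2 0) (0\<^sub>m k 1) (0\<^sub>m k 0)"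
      unfolding U2_def xblk2 using G x1
      by (subst mult_four_block_mat[of _ 2 2 _ k _ k _ _ 1 _ 0]) auto
    have Gx1: "(G * x1) $$ (1,0) = 0"
      using b2 by (simp add: scalar_prod_def sum2' G_def x1_def)
    show ?thesis
    proof (intro exI conjI allI impI)
      show "U2 * U1 \<in> carrier_mat (Suc n) (Suc n)" using U1 U2 by auto
      show "V1 * V2 \<in> carrier_mat (Suc n) (Suc n)" using V1 V2 by auto
      show "U2 * U1 * (V1 * V2) = 1\<^sub>m (Suc n)"
      proof -
        have "U2 * U1 * (V1 * V2) = U2 * (U1 * (V1 * V2))" using U1 U2 V1 V2 by (simp add: assoc_mult_mat[of _ "Suc n" "Suc n" _ "Suc n" _ "Suc n"])
        also have "U1 * (V1 * V2) = V2" by (rule inv_cancel[OF U1 V1 U1V1 V2])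
        finally show ?thesis using U2V2 by simp
      qed
      show "V1 * V2 * (U2 * U1) = 1\<^sub>m (Suc n)"
      proof -
        have "V1 * V2 * (U2 * U1) = V1 * (V2 * (U2 * U1))" using U1 U2 V1 V2 by (simp add: assoc_mult_mat[of _ "Suc n" "Suc n" _ "Suc n" _ "Suc n"])
        also have "V2 * (U2 * U1) = U1" by (rule inv_cancel[OF V2 U2 V2U2 U1])
        finally show ?thesis using V1U1 by simp
      qed
      fix i assume i: "0 < i \<and> i < Suc n"
      have "U2 * U1 * v = U2 * x" unfolding x_def using U1 U2 Suc.prems by (simp add: assoc_mult_mat[of _ "Suc n" "Suc n" _ "Suc n" _ 1])
      also have "\<dots> $$ (i,0) = 0" unfolding U2x using i G x1 nk Gx1
        by (cases "i = 1") auto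
      finally show "(U2 * U1 * v) $$ (i,0) = 0" .
    qed
  qed
qed

lemma uminus_zero_mat[simp]: "- (0\<^sub>m a b) = (0\<^sub>m a b :: 'a::group_add mat)"
  by (rule eq_matI) auto

lemma add_uminus_mat_zero[simp]: "(A :: 'a::group_add mat) \<in> carrier_mat a b \<Longrightarrow> A + - A = 0\<^sub>m a b"
  by (rule eq_matI) auto

lemma uminus_add_mat_zero[simp]: "(A :: 'a::group_add mat) \<in> carrier_mat a b \<Longrightarrow> - A + A = 0\<^sub>m a b"
  by (rule eq_matI) auto

lemma inv_cancel_sq: fixes A :: "'a::comm_ring_1 mat"
  assumes "A \<in> carrier_mat n n" "B \<in> carrier_mat n n" "A * B = 1\<^sub>m n"
  shows "X \<in> carrier_mat n n \<Longrightarrow> A * (B * X) = X"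
  by (rule inv_cancel[OF assms])

lemma idem_normal:
  fixes E :: "'a::bezout_domain mat"
  assumes "E \<in> carrier_mat n n" "E * E = E"
  shows "\<exists>r P Q. r \<le> n \<and> P \<in> carrier_mat n n \<and> Q \<in> carrier_mat n n \<and> P * Q = 1\<^sub>m n \<and> Q * P = 1\<^sub>m n \<and>
    P * E * Q = Dm n r"
  using assms
proof (induction n arbitrary: E)
  case 0
  show ?case by (rule exI[of _ 0], rule exI[of _ "1\<^sub>m 0"], rule exI[of _ "1\<^sub>m 0"])
     (insert 0, auto intro!: eq_matI simp: Dm_def)
next
  case (Suc n E)
  let ?N = "Suc n"
  note as = assoc_mult_mat[of _ ?N ?N _ ?N _ ?N]
  have E: "E \<in> carrier_mat ?N ?N" and EE: "E * E = E" using Suc.prems by auto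
  show ?case
  proof (cases "E = 0\<^sub>m ?N ?N")
    case True
    show ?thesis by (rule exI[of _ 0], rule exI[of _ "1\<^sub>m ?N"], rule exI[of _ "1\<^sub>m ?N"])
      (auto simp: True Dm_0)
  next
    case False
    obtain i j where ij: "i < ?N" "j < ?N" "E $$ (i,j) \<noteq> 0"
      using False E by (metis carrier_matD(1) carrier_matD(2) eq_matI index_zero_mat(1) zero_carrier_mat)
    define c where "c = mat ?N 1 (\<lambda>(i,_). E $$ (i,j))"
    have c: "c \<in> carrier_mat ?N 1" unfolding c_def by simp
    have Ec: "E * c = c"
    proof (rule eq_matI)
      fix i' j' assume "i' < dim_row c" "j' < dim_col c"
      hence i': "i' < ?N" and j': "j' = 0" using c by auto
      have "(E * c) $$ (i',j') = (\<Sum>k<?N. E $$ (i',k) * E $$ (k,j))"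
        using i' j' by (subst mult_entry[OF E c]) (auto simp: c_def intro!: sum.cong)
      also have "\<dots> = (E * E) $$ (i',j)" using i' ij by (simp add: mult_entry[OF E E])
      also have "\<dots> = c $$ (i',j')" using EE i' j' by (simp add: c_def)
      finally show "(E * c) $$ (i',j') = c $$ (i',j')" .
    qed (insert E c, auto)
    from col_reduce[OF c] obtain U V where U: "U \<in> carrier_mat ?N ?N" and V: "V \<in> carrier_mat ?N ?N"
      and UV: "U * V = 1\<^sub>m ?N" and VU: "V * U = 1\<^sub>m ?N"
      and zU: "\<forall>i. 0 < i \<and> i < ?N \<longrightarrow> (U * c) $$ (i,0) = 0" by blast
    define z where "z = U * c"
    have z: "z \<in> carrier_mat ?N 1" unfolding z_def using U c by simp
    define d where "d = z $$ (0,0)"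
    have d0: "d \<noteq> 0"
    proof
      assume "d = 0"
      hence "z = 0\<^sub>m ?N 1" using zU z unfolding d_def z_def by (intro eq_matI) (auto, metis neq0_conv)
      hence "V * z = 0\<^sub>m ?N 1" using V by simp
      moreover have "V * z = c" unfolding z_def by (rule inv_cancel[OF V U VU c])
      ultimately have "c $$ (i,0) = 0" using ij by simp
      thus False using ij by (simp add: c_def)
    qed
    define E' where "E' = U * E * V"
    have E': "E' \<in> carrier_mat ?N ?N" unfolding E'_def using U E V by simp
    have E'z: "E' * z = z"
    proof -
      have "E' * z = U * (E * (V * (U * c)))" unfolding E'_def z_def using U E V c
        by (simp add: assoc_mult_mat[of _ ?N ?N _ ?N _ 1] as)
      also have "V * (U * c) = c" by (rule inv_cancel[OF V U VU c])
      finally show ?thesis using Ec unfolding z_def by simp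
    qed
    have col0: "E' $$ (i',0) * d = z $$ (i',0)" if i': "i' < ?N" for i'
    proof -
      have "z $$ (i',0) = (E' * z) $$ (i',0)" using E'z by simp
      also have "\<dots> = (\<Sum>k<?N. E' $$ (i',k) * z $$ (k,0))" using i' by (simp add: mult_entry[OF E' z])
      also have "\<dots> = (\<Sum>k<?N. if k = 0 then E' $$ (i',0) * d else 0)"
        using zU unfolding z_def d_def by (intro sum.cong) auto
      also have "\<dots> = E' $$ (i',0) * d" by simp
      finally show ?thesis by simp
    qed
    have E'00: "E' $$ (0,0) = 1" using col0[of 0] d0 unfolding d_def
      by (metis mult_cancel_right2 zero_less_Suc)
    have E'i0: "E' $$ (Suc i',0) = 0" if "i' < n" for i'
      using col0[of "Suc i'"] d0 zU that unfolding z_def by simp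
    have E'E': "E' * E' = E'"
    proof -
      have "E' * E' = U * (E * (V * (U * (E * V))))" unfolding E'_def using U E V by (simp add: as)
      also have "V * (U * (E * V)) = E * V" by (rule inv_cancel_sq[OF V U VU]) (insert E V, simp)
      also have "E * (E * V) = E * V" using E V EE by (simp flip: as)
      finally show ?thesis unfolding E'_def using U E V by (simp add: as)
    qed
    define w where "w = mat 1 n (\<lambda>(_,j). E' $$ (0, Suc j))"
    define E2 where "E2 = mat n n (\<lambda>(i,j). E' $$ (Suc i, Suc j))"
    have w: "w \<in> carrier_mat 1 n" unfolding w_def by simp
    have E2: "E2 \<in> carrier_mat n n" unfolding E2_def by simp
    have E'blk: "E' = four_block_mat (1\<^sub>m 1) w (0\<^sub>m n 1) E2"
    proof (rule eq_matI)
      fix i' j' assume "i' < dim_row (four_block_mat (1\<^sub>m 1) w (0\<^sub>m n 1) E2)"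
        "j' < dim_col (four_block_mat (1\<^sub>m 1) w (0\<^sub>m n 1) E2)"
      hence i': "i' < ?N" and j': "j' < ?N" using w E2 by auto
      show "E' $$ (i',j') = four_block_mat (1\<^sub>m 1) w (0\<^sub>m n 1) E2 $$ (i',j')"
        using i' j' w E2 E'00 E'i0 unfolding w_def E2_def
        by (cases i'; cases j') auto
    qed (insert E' w E2, auto)
    have sq: "E' * E' = four_block_mat (1\<^sub>m 1) (w + w * E2) (0\<^sub>m n 1) (E2 * E2)"
      by (subst E'blk, subst E'blk, subst mult_four_block_mat[of _ 1 1 _ n _ n _ _ 1 _ n])
        (insert w E2, auto)
    have E2E2: "E2 * E2 = E2"
    proof (rule eq_matI)
      fix i' j' assume "i' < dim_row E2" "j' < dim_col E2"
      hence i': "i' < n" and j': "j' < n" using E2 by auto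
      have "(E2 * E2) $$ (i',j') = (E' * E') $$ (Suc i', Suc j')"
        unfolding sq using i' j' w E2 by simp
      also have "\<dots> = E2 $$ (i',j')" unfolding E'E' using i' j' by (simp add: E2_def)
      finally show "(E2 * E2) $$ (i',j') = E2 $$ (i',j')" .
    qed (insert E2, auto)
    have wE2: "w * E2 = 0\<^sub>m 1 n"
    proof (rule eq_matI)
      fix i' j' assume "i' < dim_row (0\<^sub>m 1 n :: 'a mat)" "j' < dim_col (0\<^sub>m 1 n :: 'a mat)"
      hence i': "i' = 0" and j': "j' < n" by auto
      have "w $$ (0,j') + (w * E2) $$ (0,j') = (E' * E') $$ (0, Suc j')"
        unfolding sq using i' j' w E2 by simp
      also have "\<dots> = w $$ (0,j')" unfolding E'E' using i' j' by (simp add: w_def)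
      finally show "(w * E2) $$ (i',j') = 0\<^sub>m 1 n $$ (i',j')" using i' j' by simp
    qed (insert w E2, auto)
    from Suc.IH[OF E2 E2E2] obtain r P2 Q2 where r: "r \<le> n" and P2: "P2 \<in> carrier_mat n n"
      and Q2: "Q2 \<in> carrier_mat n n" and PQ2: "P2 * Q2 = 1\<^sub>m n" and QP2: "Q2 * P2 = 1\<^sub>m n"
      and nf2: "P2 * E2 * Q2 = Dm n r" by blast
    define T where "T = four_block_mat (1\<^sub>m 1) w (0\<^sub>m n 1) (1\<^sub>m n)"
    define T' where "T' = four_block_mat (1\<^sub>m 1) (- w) (0\<^sub>m n 1) (1\<^sub>m n)"
    define Dg where "Dg = four_block_mat (1\<^sub>m 1) (0\<^sub>m 1 n) (0\<^sub>m n 1) E2"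
    define P3 where "P3 = four_block_mat (1\<^sub>m 1) (0\<^sub>m 1 n) (0\<^sub>m n 1) P2"
    define Q3 where "Q3 = four_block_mat (1\<^sub>m 1) (0\<^sub>m 1 n) (0\<^sub>m n 1) Q2"
    have T: "T \<in> carrier_mat ?N ?N" unfolding T_def using w by auto
    have T': "T' \<in> carrier_mat ?N ?N" unfolding T'_def using w by auto
    have P3: "P3 \<in> carrier_mat ?N ?N" unfolding P3_def using P2 by auto
    have Q3: "Q3 \<in> carrier_mat ?N ?N" unfolding Q3_def using Q2 by auto
    have Dg: "Dg \<in> carrier_mat ?N ?N" unfolding Dg_def using E2 by auto
    have TT': "T * T' = 1\<^sub>m ?N" unfolding T_def T'_def
      by (subst mult_four_block_mat[of _ 1 1 _ n _ n _ _ 1 _ n]) (insert w, auto)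
    have T'T: "T' * T = 1\<^sub>m ?N" unfolding T_def T'_def
      by (subst mult_four_block_mat[of _ 1 1 _ n _ n _ _ 1 _ n]) (insert w, auto)
    have PQ3: "P3 * Q3 = 1\<^sub>m ?N" unfolding P3_def Q3_def
      by (subst mult_four_block_mat[of _ 1 1 _ n _ n _ _ 1 _ n]) (insert P2 Q2 PQ2, auto)
    have QP3: "Q3 * P3 = 1\<^sub>m ?N" unfolding P3_def Q3_def
      by (subst mult_four_block_mat[of _ 1 1 _ n _ n _ _ 1 _ n]) (insert P2 Q2 QP2, auto)
    have TE': "T * E' = E'" unfolding T_def
      by (subst (1 2) E'blk, subst mult_four_block_mat[of _ 1 1 _ n _ n _ _ 1 _ n]) (insert w E2 wE2, auto)
    have E'T': "E' * T' = Dg" unfolding T'_def Dg_def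
      by (subst E'blk, subst mult_four_block_mat[of _ 1 1 _ n _ n _ _ 1 _ n]) (insert w E2 wE2, auto)
    have PDQ: "P3 * Dg * Q3 = Dm ?N (Suc r)" unfolding P3_def Q3_def Dg_def Dm_Suc
      by (subst mult_four_block_mat[of _ 1 1 _ n _ n _ _ 1 _ n], insert P2 E2, auto,
          subst mult_four_block_mat[of _ 1 1 _ n _ n _ _ 1 _ n], insert P2 Q2 E2, auto simp: nf2)
    show ?thesis
    proof (intro exI conjI)
      show "Suc r \<le> ?N" using r by simp
      show "P3 * T * U \<in> carrier_mat ?N ?N" using P3 T U by simp
      show "V * T' * Q3 \<in> carrier_mat ?N ?N" using V T' Q3 by simp
      show "P3 * T * U * (V * T' * Q3) = 1\<^sub>m ?N"
        using P3 T U V T' Q3 by (simp add: as inv_cancel_sq[OF U V UV] inv_cancel_sq[OF T T' TT'] PQ3)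
      show "V * T' * Q3 * (P3 * T * U) = 1\<^sub>m ?N"
        using P3 T U V T' Q3 by (simp add: as inv_cancel_sq[OF Q3 P3 QP3] inv_cancel_sq[OF T' T T'T] VU)
      have "P3 * T * U * E * (V * T' * Q3) = P3 * (T * E' * T') * Q3"
        unfolding E'_def using P3 T U V T' Q3 E by (simp add: as)
      also have "T * E' * T' = Dg" by (simp add: TE' E'T')
      finally show "P3 * T * U * E * (V * T' * Q3) = Dm ?N (Suc r)" using PDQ by simp
    qed
  qed
qed

lemma rank_eq_aux:
  fixes g h :: "'a::idom mat"
  assumes g: "g \<in> carrier_mat n n" and h: "h \<in> carrier_mat n n" and hg: "h * g = Dm n r'"
    and Dg: "Dm n r * g = g" and rr: "r < r'" "r' \<le> n"
  shows False
proof -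
  have g0: "g $$ (l,j) = 0" if l: "r \<le> l" "l < n" and j: "j < n" for l j
  proof -
    have "g $$ (l,j) = (Dm n r * g) $$ (l,j)" using Dg by simp
    also have "\<dots> = (\<Sum>k<n. Dm n r $$ (l,k) * g $$ (k,j))" using l j by (simp add: mult_entry[OF Dm_carrier g])
    also have "\<dots> = 0" using l by (intro sum.neutral) (auto simp: Dm_def)
    finally show ?thesis .
  qed
  define g1 where "g1 = mat r' r' (\<lambda>(i,j). g $$ (i,j))"
  define h1 where "h1 = mat r' r' (\<lambda>(i,j). h $$ (i,j))"
  have g1: "g1 \<in> carrier_mat r' r'" and h1: "h1 \<in> carrier_mat r' r'" unfolding g1_def h1_def by auto
  have hg1: "h1 * g1 = 1\<^sub>m r'"
  proof (rule eq_matI)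
    fix i j assume "i < dim_row (1\<^sub>m r' :: 'a mat)" "j < dim_col (1\<^sub>m r' :: 'a mat)"
    hence i: "i < r'" and j: "j < r'" by auto
    have "(h1 * g1) $$ (i,j) = (\<Sum>l<r'. h $$ (i,l) * g $$ (l,j))"
      using i j by (subst mult_entry[OF h1 g1]) (auto simp: h1_def g1_def intro!: sum.cong)
    also have "\<dots> = (\<Sum>l<n. h $$ (i,l) * g $$ (l,j))"
      using rr j by (intro sum.mono_neutral_left) (auto simp: g0)
    also have "\<dots> = (h * g) $$ (i,j)" using i j rr by (simp add: mult_entry[OF h g])
    also have "\<dots> = 1\<^sub>m r' $$ (i,j)" unfolding hg using i j rr by (simp add: Dm_def)
    finally show "(h1 * g1) $$ (i,j) = 1\<^sub>m r' $$ (i,j)" .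
  qed (insert h1 g1, auto)
  have "det h1 * det g1 = 1" using det_mult[OF h1 g1] hg1 by simp
  moreover have "det g1 = 0"
  proof -
    have gt: "transpose_mat g1 \<in> carrier_mat r' r'" using g1 by simp
    have "transpose_mat g1 *\<^sub>v unit_vec r' r = 0\<^sub>v r'"
    proof (rule eq_vecI)
      fix i assume "i < dim_vec (0\<^sub>v r' :: 'a vec)"
      hence i: "i < r'" by simp
      have "(transpose_mat g1 *\<^sub>v unit_vec r' r) $ i = (\<Sum>k\<in>{0..<r'}. g1 $$ (k,i) * unit_vec r' r $ k)"
        using i g1 by (simp add: scalar_prod_def)
      also have "\<dots> = (\<Sum>k\<in>{0..<r'}. if k = r then g1 $$ (r,i) else 0)"
        using rr by (intro sum.cong) auto
      also have "\<dots> = 0" using rr i by (simp add: g1_def g0)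
      finally show "(transpose_mat g1 *\<^sub>v unit_vec r' r) $ i = 0\<^sub>v r' $ i" using i by simp
    qed (insert g1, auto)
    moreover have "unit_vec r' r \<noteq> (0\<^sub>v r' :: 'a vec)"
    proof
      assume "unit_vec r' r = (0\<^sub>v r' :: 'a vec)"
      hence "unit_vec r' r $ r = (0\<^sub>v r' :: 'a vec) $ r" by simp
      thus False using rr by simp
    qed
    ultimately have "det (transpose_mat g1) = 0"
      using det_0_iff_vec_prod_zero[OF gt] by (meson unit_vec_carrier)
    thus ?thesis using det_transpose[OF g1] by simp
  qed
  ultimately show False by simp
qed

lemma rank_eq:
  fixes g h :: "'a::idom mat"
  assumes g: "g \<in> carrier_mat n n" and h: "h \<in> carrier_mat n n"
    and gh: "g * h = Dm n r" and hg: "h * g = Dm n r'"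
    and Dg: "Dm n r * g = g" and Dh: "Dm n r' * h = h" and "r \<le> n" "r' \<le> n"
  shows "r = r'"
proof -
  have "\<not> r < r'" using rank_eq_aux[OF g h hg Dg] assms by blast
  moreover have "\<not> r' < r" using rank_eq_aux[OF h g gh Dh] assms by blast
  ultimately show ?thesis by simp
qed

lemma assemble:
  fixes Ms Ns G H E F W W' :: "'a::comm_ring_1 mat"
  assumes c: "Ms \<in> carrier_mat n n" "Ns \<in> carrier_mat n n" "G \<in> carrier_mat n n" "H \<in> carrier_mat n n"
    "E \<in> carrier_mat n n" "F \<in> carrier_mat n n" "W \<in> carrier_mat n n" "W' \<in> carrier_mat n n"
    and GH: "G * H = E" and HG: "H * G = F" and GF: "G * F = G" and EG: "E * G = G"
    and FH: "F * H = H" and HE: "H * E = H"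
    and WW1: "W * W' + E = 1\<^sub>m n" and WW2: "W' * W + F = 1\<^sub>m n"
    and EW: "E * W = 0\<^sub>m n n" and WF: "W * F = 0\<^sub>m n n" and FW: "F * W' = 0\<^sub>m n n" and WE: "W' * E = 0\<^sub>m n n"
    and MsE: "Ms * E = Ms" and MsG: "Ms * G = G * Ns" and FNs: "F * Ns = Ns"
  shows "similar_mat Ms Ns"
proof -
  note as = assoc_mult_mat[of _ n n _ n _ n]
  note dl = add_mult_distrib_mat[of _ n n _ _ n]
  note dr = mult_add_distrib_mat[of _ n n _ n]
  have GW: "G * W' = 0\<^sub>m n n"
  proof -
    have "G * W' = G * (F * W')" using c by (simp flip: as add: GF)
    thus ?thesis using c FW by simp
  qed
  have WH: "W * H = 0\<^sub>m n n"
  proof -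
    have "W * H = (W * F) * H" using c by (simp add: as FH)
    thus ?thesis using c WF by simp
  qed
  have HW: "H * W = 0\<^sub>m n n"
  proof -
    have "H * W = H * (E * W)" using c by (simp flip: as add: HE)
    thus ?thesis using c EW by simp
  qed
  have WG: "W' * G = 0\<^sub>m n n"
  proof -
    have "W' * G = (W' * E) * G" using c by (simp add: as EG)
    thus ?thesis using c WE by simp
  qed
  define P where "P = G + W"
  define Q where "Q = H + W'"
  have P: "P \<in> carrier_mat n n" and Q: "Q \<in> carrier_mat n n" unfolding P_def Q_def using c by auto
  have PQ: "P * Q = 1\<^sub>m n"
  proof -
    have "P * Q = W * W' + E" unfolding P_def Q_def using c
      by (simp add: dl dr GH GW WH comm_add_mat[of _ n n])
    thus ?thesis using WW1 by simp
  qed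
  have QP: "Q * P = 1\<^sub>m n"
  proof -
    have "Q * P = W' * W + F" unfolding P_def Q_def using c
      by (simp add: dl dr HG HW WG comm_add_mat[of _ n n])
    thus ?thesis using WW2 by simp
  qed
  have MsP: "Ms * P = G * Ns"
  proof -
    have "Ms * W = Ms * (E * W)" using c by (simp flip: as add: MsE)
    hence "Ms * W = 0\<^sub>m n n" using c EW by simp
    thus ?thesis unfolding P_def using c by (simp add: dr MsG)
  qed
  have QMsP: "Q * (Ms * P) = Ns"
  proof -
    have "Q * (Ms * P) = H * G * Ns + W' * G * Ns" unfolding MsP Q_def using c by (simp add: dl as)
    also have "\<dots> = Ns" using c by (simp add: HG WG FNs flip: as)
    finally show ?thesis .
  qed
  have "Ms = P * Q * Ms * (P * Q)" using c PQ by simp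
  also have "\<dots> = P * (Q * (Ms * P)) * Q" using c P Q by (simp add: as)
  also have "\<dots> = P * Ns * Q" unfolding QMsP ..
  finally have "Ms = P * Ns * Q" .
  thus ?thesis using P Q PQ QP c by (intro similar_matI[of _ _ P Q n]) auto
qed

definition Dc :: "nat \<Rightarrow> nat \<Rightarrow> 'a::comm_ring_1 mat" where
  "Dc n r = mat n n (\<lambda>(i,j). if i = j \<and> \<not> i < r then 1 else 0)"

lemma Dc_carrier[simp]: "Dc n r \<in> carrier_mat n n"
  unfolding Dc_def by simp

lemma Dc_dims[simp]: "dim_row (Dc n r) = n" "dim_col (Dc n r) = n"
  unfolding Dc_def by simp_all

lemma Dm_dims[simp]: "dim_row (Dm n r) = n" "dim_col (Dm n r) = n"
  unfolding Dm_def by simp_all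

lemma diag_prod_entry:
  fixes P Q :: "'a::comm_ring_1 mat"
  assumes P: "P \<in> carrier_mat n n" and Q: "Q \<in> carrier_mat n n"
    and Pd: "\<And>i k. i < n \<Longrightarrow> k < n \<Longrightarrow> i \<noteq> k \<Longrightarrow> P $$ (i,k) = 0"
    and i: "i < n" and j: "j < n"
  shows "(P * Q) $$ (i,j) = P $$ (i,i) * Q $$ (i,j)"
proof -
  have "(P * Q) $$ (i,j) = (\<Sum>k<n. P $$ (i,k) * Q $$ (k,j))" using i j by (simp add: mult_entry[OF P Q])
  also have "\<dots> = (\<Sum>k<n. if k = i then P $$ (i,i) * Q $$ (i,j) else 0)"
    using Pd i by (intro sum.cong) auto
  also have "\<dots> = P $$ (i,i) * Q $$ (i,j)" using i by simp
  finally show ?thesis .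
qed

lemma Dc_idem: "Dc n r * Dc n r = Dc n r"
proof (rule eq_matI)
  fix i j assume "i < dim_row (Dc n r :: 'a::comm_ring_1 mat)" "j < dim_col (Dc n r :: 'a::comm_ring_1 mat)"
  hence i: "i < n" and j: "j < n" by auto
  show "(Dc n r * Dc n r) $$ (i,j) = (Dc n r :: 'a mat) $$ (i,j)"
    by (subst diag_prod_entry[OF Dc_carrier Dc_carrier _ i j]) (insert i j, auto simp: Dc_def Dm_def)
qed auto

lemma Dm_Dc: "Dm n r * Dc n r = 0\<^sub>m n n"
proof (rule eq_matI)
  fix i j assume "i < dim_row (0\<^sub>m n n :: 'a::comm_ring_1 mat)" "j < dim_col (0\<^sub>m n n :: 'a::comm_ring_1 mat)"
  hence i: "i < n" and j: "j < n" by auto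
  show "(Dm n r * Dc n r) $$ (i,j) = (0\<^sub>m n n :: 'a mat) $$ (i,j)"
    by (subst diag_prod_entry[OF Dm_carrier Dc_carrier _ i j]) (insert i j, auto simp: Dc_def Dm_def)
qed auto

lemma Dc_Dm: "Dc n r * Dm n r = 0\<^sub>m n n"
proof (rule eq_matI)
  fix i j assume "i < dim_row (0\<^sub>m n n :: 'a::comm_ring_1 mat)" "j < dim_col (0\<^sub>m n n :: 'a::comm_ring_1 mat)"
  hence i: "i < n" and j: "j < n" by auto
  show "(Dc n r * Dm n r) $$ (i,j) = (0\<^sub>m n n :: 'a mat) $$ (i,j)"
    by (subst diag_prod_entry[OF Dc_carrier Dm_carrier _ i j]) (insert i j, auto simp: Dc_def Dm_def)
qed auto

lemma Dc_plus_Dm: "Dc n r + Dm n r = 1\<^sub>m n"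
  by (rule eq_matI) (auto simp: Dc_def Dm_def)

lemma tail: fixes A :: "'a::comm_ring_1 mat"
  assumes "A \<in> carrier_mat n n" "B \<in> carrier_mat n n" "A * B = C"
  shows "Y \<in> carrier_mat n n \<Longrightarrow> A * (B * Y) = C * Y"
proof -
  assume Y: "Y \<in> carrier_mat n n"
  have "A * (B * Y) = (A * B) * Y" by (rule assoc_mult_mat[OF assms(1,2) Y, symmetric])
  thus ?thesis using assms by simp
qed

lemma complement:
  fixes E F G H :: "'a::bezout_domain mat"
  assumes c: "E \<in> carrier_mat n n" "F \<in> carrier_mat n n" "G \<in> carrier_mat n n" "H \<in> carrier_mat n n"
    and EE: "E * E = E" and FF: "F * F = F"
    and GH: "G * H = E" and HG: "H * G = F" and EG: "E * G = G" and FH: "F * H = H"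
  shows "\<exists>W W'. W \<in> carrier_mat n n \<and> W' \<in> carrier_mat n n \<and> W * W' + E = 1\<^sub>m n \<and> W' * W + F = 1\<^sub>m n \<and>
    E * W = 0\<^sub>m n n \<and> W * F = 0\<^sub>m n n \<and> F * W' = 0\<^sub>m n n \<and> W' * E = 0\<^sub>m n n"
proof -
  note as = assoc_mult_mat[of _ n n _ n _ n]
  note dl = add_mult_distrib_mat[of _ n n _ _ n]
  note dr = mult_add_distrib_mat[of _ n n _ n]
  from idem_normal[OF c(1) EE] obtain re Pe Qe where re: "re \<le> n" and Pe: "Pe \<in> carrier_mat n n"
    and Qe: "Qe \<in> carrier_mat n n" and PQe: "Pe * Qe = 1\<^sub>m n" and QPe: "Qe * Pe = 1\<^sub>m n"
    and nfE: "Pe * E * Qe = Dm n re" by blast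
  from idem_normal[OF c(2) FF] obtain rf Pf Qf where rf: "rf \<le> n" and Pf: "Pf \<in> carrier_mat n n"
    and Qf: "Qf \<in> carrier_mat n n" and PQf: "Pf * Qf = 1\<^sub>m n" and QPf: "Qf * Pf = 1\<^sub>m n"
    and nfF: "Pf * F * Qf = Dm n rf" by blast
  note cc = c Pe Qe Pf Qf Dc_carrier[of n] Dm_carrier[of n]
  note canc = inv_cancel_sq[OF Pe Qe PQe] inv_cancel_sq[OF Qe Pe QPe] inv_cancel_sq[OF Pf Qf PQf]
    inv_cancel_sq[OF Qf Pf QPf] PQe QPe PQf QPf
  note tl = tail[OF c(3) c(4) GH] tail[OF c(4) c(3) HG] tail[OF c(1) c(3) EG] tail[OF c(2) c(4) FH]
  have nfE': "Pe * (E * Qe) = Dm n re" using nfE cc by (simp add: as)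
  have nfF': "Pf * (F * Qf) = Dm n rf" using nfF cc by (simp add: as)
  define g where "g = Pe * (G * Qf)"
  define h where "h = Pf * (H * Qe)"
  have g: "g \<in> carrier_mat n n" and h: "h \<in> carrier_mat n n" unfolding g_def h_def using cc by auto
  have gh: "g * h = Dm n re" unfolding g_def h_def using cc by (simp add: as canc tl nfE')
  have hg: "h * g = Dm n rf" unfolding g_def h_def using cc by (simp add: as canc tl nfF')
  have Dg: "Dm n re * g = g" unfolding g_def nfE'[symmetric] using cc by (simp add: as canc tl)
  have Dh: "Dm n rf * h = h" unfolding h_def nfF'[symmetric] using cc by (simp add: as canc tl)
  have rr: "re = rf" by (rule rank_eq[OF g h gh hg Dg Dh re rf])
  define r where "r = re"
  have Eeq: "E = Qe * (Dm n r * Pe)"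
    unfolding r_def nfE'[symmetric] using cc by (simp add: as canc)
  have Feq: "F = Qf * (Dm n r * Pf)"
    unfolding r_def rr nfF'[symmetric] using cc by (simp add: as canc)
  define W where "W = Qe * (Dc n r * Pf)"
  define W' where "W' = Qf * (Dc n r * Pe)"
  have W: "W \<in> carrier_mat n n" and W': "W' \<in> carrier_mat n n" unfolding W_def W'_def using cc by auto
  note dd = tail[OF Dc_carrier Dc_carrier Dc_idem] tail[OF Dm_carrier Dc_carrier Dm_Dc]
    tail[OF Dc_carrier Dm_carrier Dc_Dm]
  have one: "Qe * (Dc n r * Pe) + Qe * (Dm n r * Pe) = 1\<^sub>m n"
  proof -
    have "Qe * ((Dc n r + Dm n r) * Pe) = Qe * (Dc n r * Pe + Dm n r * Pe)"
      by (simp add: add_mult_distrib_mat[OF Dc_carrier Dm_carrier Pe])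
    also have "\<dots> = Qe * (Dc n r * Pe) + Qe * (Dm n r * Pe)"
      by (rule mult_add_distrib_mat[OF Qe mult_carrier_mat[OF Dc_carrier Pe] mult_carrier_mat[OF Dm_carrier Pe]])
    finally show ?thesis using cc QPe by (simp add: Dc_plus_Dm)
  qed
  have one': "Qf * (Dc n r * Pf) + Qf * (Dm n r * Pf) = 1\<^sub>m n"
  proof -
    have "Qf * ((Dc n r + Dm n r) * Pf) = Qf * (Dc n r * Pf + Dm n r * Pf)"
      by (simp add: add_mult_distrib_mat[OF Dc_carrier Dm_carrier Pf])
    also have "\<dots> = Qf * (Dc n r * Pf) + Qf * (Dm n r * Pf)"
      by (rule mult_add_distrib_mat[OF Qf mult_carrier_mat[OF Dc_carrier Pf] mult_carrier_mat[OF Dm_carrier Pf]])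
    finally show ?thesis using cc QPf by (simp add: Dc_plus_Dm)
  qed
  have DcC: "(Dc n r :: 'a mat) \<in> carrier_mat n n" and DmC: "(Dm n r :: 'a mat) \<in> carrier_mat n n" by simp_all
  note cc2 = c Pe Qe Pf Qf DcC DmC
  show ?thesis
  proof (intro exI conjI)
    show "W * W' + E = 1\<^sub>m n" unfolding W_def W'_def using cc2 one
      by (subst Eeq) (simp add: as canc dd del: Dc_carrier Dm_carrier)
    show "W' * W + F = 1\<^sub>m n" unfolding W_def W'_def using cc2 one'
      by (subst Feq) (simp add: as canc dd del: Dc_carrier Dm_carrier)
    show "E * W = 0\<^sub>m n n" unfolding W_def using cc2 by (subst Eeq) (simp add: as canc dd del: Dc_carrier Dm_carrier)
    show "W * F = 0\<^sub>m n n" unfolding W_def using cc2 by (subst Feq) (simp add: as canc dd del: Dc_carrier Dm_carrier)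
    show "F * W' = 0\<^sub>m n n" unfolding W'_def using cc2 by (subst Feq) (simp add: as canc dd del: Dc_carrier Dm_carrier)
    show "W' * E = 0\<^sub>m n n" unfolding W'_def using cc2 by (subst Eeq) (simp add: as canc dd del: Dc_carrier Dm_carrier)
  qed (insert W W', auto)
qed

lemma pow_swap:
  fixes A C :: "'a::comm_ring_1 mat"
  assumes A: "A \<in> carrier_mat n n" and C: "C \<in> carrier_mat n n"
  shows "A * (C * A) ^\<^sub>m s = (A * C) ^\<^sub>m s * A"
proof (induction s)
  case 0
  show ?case using A C by simp
next
  case (Suc s)
  note as = assoc_mult_mat[of _ n n _ n _ n]
  have "A * (C * A) ^\<^sub>m Suc s = (A * (C * A) ^\<^sub>m s) * (C * A)" using A C by (simp add: as)
  also have "\<dots> = (A * C) ^\<^sub>m s * A * (C * A)" unfolding Suc ..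
  also have "\<dots> = (A * C) ^\<^sub>m Suc s * A" using A C by (simp add: as)
  finally show ?case .
qed

lemma pow_comm:
  fixes A X :: "'a::comm_ring_1 mat"
  assumes A: "A \<in> carrier_mat n n" and X: "X \<in> carrier_mat n n" and AX: "A * X = X * A"
  shows "A ^\<^sub>m s * X = X * A ^\<^sub>m s"
proof (induction s)
  case 0
  show ?case using A X by simp
next
  case (Suc s)
  note as = assoc_mult_mat[of _ n n _ n _ n]
  have "A ^\<^sub>m Suc s * X = A ^\<^sub>m s * (A * X)" using A X by (simp add: as)
  also have "\<dots> = (A ^\<^sub>m s * X) * A" unfolding AX using A X by (simp add: as)
  also have "\<dots> = X * A ^\<^sub>m Suc s" unfolding Suc using A X by (simp add: as)
  finally show ?case .
qed

theorem theorem3p4: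
  fixes A B C :: "'a::bezout_domain mat"
  assumes "A \<in> carrier_mat n n" and "B \<in> carrier_mat n n" and "C \<in> carrier_mat n n"
    and "A * B * A = A * C * A"
    and "drazin_invertible (A * B)"
  shows "\<exists>k::nat. \<forall>s\<ge>k. similar_mat ((A * B) ^\<^sub>m s) ((C * A) ^\<^sub>m s)"
proof -
  note as = assoc_mult_mat[of _ n n _ n _ n]
  have A: "A \<in> carrier_mat n n" and B: "B \<in> carrier_mat n n" and C: "C \<in> carrier_mat n n"
    using assms by auto
  define M where "M = A * B"
  define N where "N = C * A"
  have M: "M \<in> carrier_mat n n" and N: "N \<in> carrier_mat n n" unfolding M_def N_def using A B C by auto
  from assms(5) obtain X where "drazin_inverse M X" unfolding drazin_invertible_def M_def by blast
  then obtain m where X: "X \<in> carrier_mat n n" and MX: "M * X = X * M" and XMX: "X * M * X = X"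
    and Mm: "M ^\<^sub>m (m + 1) * X = M ^\<^sub>m m"
    unfolding drazin_inverse_def using M by auto
  note cc = A B C M N X
  have ABA: "A * (B * A) = A * (C * A)" using assms(4) A B C by (simp add: as)
  have ABAY: "A * (B * (A * Y)) = A * (C * (A * Y))" if Y: "Y \<in> carrier_mat n n" for Y
  proof -
    have "A * (B * (A * Y)) = (A * (B * A)) * Y" using A B Y by (simp add: as)
    also have "\<dots> = (A * (C * A)) * Y" unfolding ABA ..
    also have "\<dots> = A * (C * (A * Y))" using A C Y by (simp add: as)
    finally show ?thesis .
  qed
  have MAB: "M * Y = A * (B * Y)" if "Y \<in> carrier_mat n n" for Y
    unfolding M_def using A B that by (simp add: as)
  have XMXY: "X * (M * (X * Y)) = X * Y" if Y: "Y \<in> carrier_mat n n" for Y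
  proof -
    have "X * (M * (X * Y)) = (X * M * X) * Y" using X M Y by (simp add: as)
    thus ?thesis unfolding XMX .
  qed
  have Xeq: "M * (X * X) = X"
  proof -
    have "M * (X * X) = (M * X) * X" using M X by (simp add: as)
    also have "\<dots> = X * M * X" unfolding MX ..
    finally show ?thesis unfolding XMX .
  qed
  have pwAC: "M ^\<^sub>m t * A = (A * C) ^\<^sub>m t * A" for t
  proof (induction t)
    case 0 show ?case using A C M by simp
  next
    case (Suc t)
    have "M ^\<^sub>m Suc t * A = M ^\<^sub>m t * (A * (B * A))" unfolding M_def using A B by (simp add: as)
    also have "\<dots> = M ^\<^sub>m t * (A * (C * A))" unfolding ABA ..
    also have "\<dots> = (M ^\<^sub>m t * A) * (C * A)" using A C M by (simp add: as)
    also have "\<dots> = (A * C) ^\<^sub>m t * A * (C * A)" unfolding Suc ..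
    also have "\<dots> = (A * C) ^\<^sub>m Suc t * A" using A C by (simp add: as)
    finally show ?case .
  qed
  have AN: "A * N ^\<^sub>m s = M ^\<^sub>m s * A" for s
    unfolding N_def pow_swap[OF A C] pwAC ..
  have NC: "N ^\<^sub>m s * C = C * (A * C) ^\<^sub>m s" for s
    unfolding N_def pow_swap[OF C A] ..
  have ACX: "(A * C) ^\<^sub>m s * X = M ^\<^sub>m s * X" for s
  proof -
    have "(A * C) ^\<^sub>m s * X = (A * C) ^\<^sub>m s * (M * (X * X))" unfolding Xeq ..
    also have "\<dots> = ((A * C) ^\<^sub>m s * A) * (B * (X * X))" unfolding M_def using A B C X by (simp add: as)
    also have "\<dots> = (M ^\<^sub>m s * A) * (B * (X * X))" unfolding pwAC ..
    also have "\<dots> = M ^\<^sub>m s * (M * (X * X))" unfolding M_def using A B C X by (simp add: as)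
    finally show ?thesis unfolding Xeq .
  qed
  have XMs: "M ^\<^sub>m s * X = X * M ^\<^sub>m s" for s by (rule pow_comm[OF M X MX])
  have MMs: "M ^\<^sub>m s * M = M * M ^\<^sub>m s" for s by (rule pow_comm[OF M M refl])
  have Mpow: "M ^\<^sub>m Suc t * X = M ^\<^sub>m t" if "m \<le> t" for t
    using that
  proof (induction t rule: dec_induct)
    case base show ?case using Mm by simp
  next
    case (step t)
    have "M ^\<^sub>m Suc (Suc t) * X = M ^\<^sub>m Suc t * (M * X)" using M X by (simp add: as)
    also have "\<dots> = (M ^\<^sub>m Suc t * X) * M" unfolding MX using M X by (simp add: as)
    also have "\<dots> = M ^\<^sub>m Suc t" unfolding step.IH by simp
    finally show ?case .
  qed
  have NSuc: "N ^\<^sub>m Suc t = C * (M ^\<^sub>m t * A)" for t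
  proof -
    have "N ^\<^sub>m Suc t = (N ^\<^sub>m t * C) * A" unfolding N_def using A C by (simp add: as)
    also have "\<dots> = C * ((A * C) ^\<^sub>m t * A)" unfolding NC using A C by (simp add: as)
    finally show ?thesis unfolding pwAC .
  qed
  define E where "E = M * X"
  define F where "F = C * (X * A)"
  define G where "G = M * (X * A)"
  define H where "H = C * X"
  have E: "E \<in> carrier_mat n n" and F: "F \<in> carrier_mat n n" and G: "G \<in> carrier_mat n n"
    and H: "H \<in> carrier_mat n n" unfolding E_def F_def G_def H_def using cc by auto
  have ACX1: "A * (C * X) = M * X"
    using ACX[of 1] A C M X by (simp add: as)
  have ACXY: "A * (C * (X * Y)) = M * (X * Y)" if Y: "Y \<in> carrier_mat n n" for Y
  proof -
    have "A * (C * (X * Y)) = (A * (C * X)) * Y" using A C X Y by (simp add: as)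
    also have "\<dots> = M * (X * Y)" unfolding ACX1 using M X Y by (simp add: as)
    finally show ?thesis .
  qed
  have XE: "X * (M * X) = X" using XMX M X by (simp add: as)
  have XEY: "X * (M * (X * Y)) = X * Y" if "Y \<in> carrier_mat n n" for Y by (rule XMXY[OF that])
  have EE: "E * E = E" unfolding E_def using M X XEY[OF X] XE by (simp add: as)
  have GH: "G * H = E" unfolding G_def H_def E_def using cc by (simp add: as ACXY XEY XE ACX1)
  have HG: "H * G = F" unfolding G_def H_def F_def using cc by (simp add: as ACXY XEY XE ACX1)
  have EG: "E * G = G" unfolding G_def E_def using cc by (simp add: as ACXY XEY XE ACX1)
  have FH: "F * H = H" unfolding F_def H_def using cc by (simp add: as ACXY XEY XE ACX1)
  have FF: "F * F = F" unfolding F_def using cc by (simp add: as ACXY XEY XE ACX1)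
  have GF: "G * F = G" unfolding G_def F_def using cc by (simp add: as ACXY XEY XE ACX1)
  have HE: "H * E = H" unfolding H_def E_def using cc by (simp add: as ACXY XEY XE ACX1)
  from complement[OF E F G H EE FF GH HG EG FH] obtain W W' where W: "W \<in> carrier_mat n n"
    and W': "W' \<in> carrier_mat n n" and WW1: "W * W' + E = 1\<^sub>m n" and WW2: "W' * W + F = 1\<^sub>m n"
    and EW: "E * W = 0\<^sub>m n n" and WF: "W * F = 0\<^sub>m n n" and FW: "F * W' = 0\<^sub>m n n"
    and WE: "W' * E = 0\<^sub>m n n" by blast
  show ?thesis
  proof (intro exI allI impI)
    fix s assume s: "Suc m \<le> s"
    then obtain t where st: "s = Suc t" and t: "m \<le> t" by (cases s) auto
    have Ms: "M ^\<^sub>m s \<in> carrier_mat n n" and Ns: "N ^\<^sub>m s \<in> carrier_mat n n" using M N by auto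
    have MsE: "M ^\<^sub>m s * E = M ^\<^sub>m s"
    proof -
      have "M ^\<^sub>m s * E = M ^\<^sub>m Suc s * X" unfolding E_def using M X by (simp add: as)
      also have "\<dots> = M ^\<^sub>m s" using Mpow[of s] t st by simp
      finally show ?thesis .
    qed
    have MsG: "M ^\<^sub>m s * G = G * N ^\<^sub>m s"
    proof -
      have "G * N ^\<^sub>m s = M * (X * (A * N ^\<^sub>m s))" unfolding G_def using cc by (simp add: as)
      also have "\<dots> = M * (X * M ^\<^sub>m s * A)" unfolding AN using cc by (simp add: as)
      also have "\<dots> = M * (M ^\<^sub>m s * X * A)" unfolding XMs ..
      also have "\<dots> = (M * M ^\<^sub>m s) * (X * A)" using cc by (simp add: as)
      also have "\<dots> = M ^\<^sub>m s * G" unfolding MMs[symmetric] G_def using cc by (simp add: as)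
      finally show ?thesis by simp
    qed
    have FNs: "F * N ^\<^sub>m s = N ^\<^sub>m s"
    proof -
      have "F * N ^\<^sub>m s = C * (X * (A * N ^\<^sub>m s))" unfolding F_def using cc by (simp add: as)
      also have "\<dots> = C * (X * M ^\<^sub>m s * A)" unfolding AN using cc by (simp add: as)
      also have "\<dots> = C * (M ^\<^sub>m s * X * A)" unfolding XMs ..
      also have "\<dots> = C * (M ^\<^sub>m t * A)" unfolding st Mpow[OF t] ..
      also have "\<dots> = N ^\<^sub>m s" unfolding st NSuc ..
      finally show ?thesis .
    qed
    have "similar_mat (M ^\<^sub>m s) (N ^\<^sub>m s)"
      by (rule assemble[OF Ms Ns G H E F W W' GH HG GF EG FH HE WW1 WW2 EW WF FW WE MsE MsG FNs])
    thus "similar_mat ((A * B) ^\<^sub>m s) ((C * A) ^\<^sub>m s)" unfolding M_def N_def .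
  qed
qed

end
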